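(* Every strictly positive formula $A$ is $\mathbf{RJ}$-equivalent (i.e. $A\vdash_{\mathbf{RJ}}A'$ and $A'\vdash_{\mathbf{RJ}}A$) to an ordered formula $A'$.
   Context: Strictly positive formulas: $A::= p\mid \top\mid (A\land B)\mid \alpha A$, $\alpha\le\omega$. $\mathbf{RJ}$: $A\vdash A$; $A\vdash\top$; cut; $A\land B\vdash A$; $A\land B\vdash B$; from $A\vdash B$, $A\vdash C$ infer $A\vdash B\land C$; from $A\vdash B$ infer $\alpha A\vdash\alpha B$; $\alpha\alpha A\vdash\alpha A$; $\alpha\beta A\vdash\beta A$, $\beta\alpha A\vdash\beta A$ for $\alpha\ge\beta$; $\alpha A\land\beta B\vdash\alpha(A\land\beta B)$ for $\alpha>\beta$. ${\mathcal L}_{\ge m}$ is the set of strictly positive formulas all of whose modalities lie in $[m,\omega]$. A fact is $\top$ or a conjunction of variables. Ordered formulas are defined inductively: $A$ is ordered if $A=F\land\bigwedge_{i<k}m_iA_i$ for some $k\ge0$ (with $A=F$ if $k=0$), where $F$ is a fact, each $A_i\in{\mathcal L}_{\ge m_i}$ is ordered, and $m_0\ge m_1\ge\dots\ge m_{k-1}$. *)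

theory Defs
  imports Main "HOL-Library.Extended_Nat"
begin

text \<open>Strictly positive formulas; modalities are ordinals alpha \<le> omega,
  represented as extended naturals (enat, with \<infinity> standing for omega).\<close>
datatype 'a fm = Var 'a | Top | Conj "'a fm" "'a fm" | Dia enat "'a fm"

inductive RJ :: "'a fm \<Rightarrow> 'a fm \<Rightarrow> bool" (infix "\<turnstile>" 50) where
  refl: "A \<turnstile> A"
| top: "A \<turnstile> Top"
| cut: "A \<turnstile> B \<Longrightarrow> B \<turnstile> C \<Longrightarrow> A \<turnstile> C"
| conjE1: "Conj A B \<turnstile> A"
| conjE2: "Conj A B \<turnstile> B"
| conjI: "A \<turnstile> B \<Longrightarrow> A \<turnstile> C \<Longrightarrow> A \<turnstile> Conj B C"
| mono: "A \<turnstile> B \<Longrightarrow> Dia \<alpha> A \<turnstile> Dia \<alpha> B"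
| trans4: "Dia \<alpha> (Dia \<alpha> A) \<turnstile> Dia \<alpha> A"
| absorb1: "\<alpha> \<ge> \<beta> \<Longrightarrow> Dia \<alpha> (Dia \<beta> A) \<turnstile> Dia \<beta> A"
| absorb2: "\<alpha> \<ge> \<beta> \<Longrightarrow> Dia \<beta> (Dia \<alpha> A) \<turnstile> Dia \<beta> A"
| pull: "\<alpha> > \<beta> \<Longrightarrow> Conj (Dia \<alpha> A) (Dia \<beta> B) \<turnstile> Dia \<alpha> (Conj A (Dia \<beta> B))"

fun mods :: "'a fm \<Rightarrow> enat set" where
  "mods (Var p) = {}"
| "mods Top = {}"
| "mods (Conj A B) = mods A \<union> mods B"
| "mods (Dia \<alpha> A) = insert \<alpha> (mods A)"

definition L_ge :: "enat \<Rightarrow> 'a fm set" where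
  "L_ge m = {A. \<forall>\<alpha>\<in>mods A. m \<le> \<alpha>}"

inductive var_conj :: "'a fm \<Rightarrow> bool" where
  "var_conj (Var p)"
| "var_conj A \<Longrightarrow> var_conj B \<Longrightarrow> var_conj (Conj A B)"

definition is_fact :: "'a fm \<Rightarrow> bool" where
  "is_fact F \<longleftrightarrow> F = Top \<or> var_conj F"

fun conjs :: "'a fm list \<Rightarrow> 'a fm" where
  "conjs [] = Top"
| "conjs [A] = A"
| "conjs (A # As) = Conj A (conjs As)"

inductive ordered :: "'a fm \<Rightarrow> bool" where
  fact: "is_fact F \<Longrightarrow> ordered F"
| step: "is_fact F \<Longrightarrow> xs \<noteq> [] \<Longrightarrow>
     (\<forall>i<length xs. ordered (snd (xs ! i)) \<and> snd (xs ! i) \<in> L_ge (fst (xs ! i))) \<Longrightarrow>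
     sorted_wrt (\<ge>) (map fst xs) \<Longrightarrow>
     ordered (Conj F (conjs (map (\<lambda>(m, B). Dia m B) xs)))"

end

theory Submission
  imports Defs
begin

lemma conjI': "A \<turnstile> B \<Longrightarrow> C \<turnstile> D \<Longrightarrow> Conj A C \<turnstile> Conj B D"
  by (meson RJ.conjI RJ.cut conjE1 conjE2)

lemma conjs_E: "x \<in> set l \<Longrightarrow> conjs l \<turnstile> x"
proof (induction l rule: conjs.induct)
  case 1 then show ?case by simp
next
  case (2 A) then show ?case by (simp add: RJ.refl)
next
  case (3 A B As) then show ?case
    by (auto intro: conjE1 RJ.cut[OF conjE2])
qed

lemma conjs_I: "(\<forall>x\<in>set l. X \<turnstile> x) \<Longrightarrow> X \<turnstile> conjs l"
proof (induction l rule: conjs.induct)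
  case 1 then show ?case by (simp add: RJ.top)
next
  case (2 A) then show ?case by simp
next
  case (3 A B As) then show ?case
    by (auto intro: RJ.conjI)
qed

definition Dl :: "(enat \<times> 'a fm) list \<Rightarrow> 'a fm" where
  "Dl xs = conjs (map (\<lambda>(m, B). Dia m B) xs)"

lemma Dl_E: "(m,B) \<in> set xs \<Longrightarrow> Dl xs \<turnstile> Dia m B"
  unfolding Dl_def by (rule conjs_E) force

lemma Dl_I: "(\<And>m B. (m,B)\<in>set xs \<Longrightarrow> X \<turnstile> Dia m B) \<Longrightarrow> X \<turnstile> Dl xs"
  unfolding Dl_def by (rule conjs_I) auto

lemma Dl_nil: "Dl [] = Top" by (simp add: Dl_def)

lemma var_conj_mods: "var_conj F \<Longrightarrow> mods F = {}"
  by (induction rule: var_conj.induct) auto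

lemma fact_mods: "is_fact F \<Longrightarrow> mods F = {}"
  unfolding is_fact_def using var_conj_mods by auto

lemma mods_conjs: "mods (conjs l) \<subseteq> \<Union>(mods ` set l)"
  by (induction l rule: conjs.induct) auto

definition mk :: "'a fm \<Rightarrow> (enat \<times> 'a fm) list \<Rightarrow> 'a fm" where
  "mk F xs = (if xs = [] then F else Conj F (Dl xs))"

definition good :: "'a fm \<Rightarrow> (enat \<times> 'a fm) list \<Rightarrow> bool" where
  "good F xs \<longleftrightarrow> is_fact F \<and> (\<forall>(m,B)\<in>set xs. ordered B \<and> B \<in> L_ge m)
     \<and> sorted_wrt (\<ge>) (map fst xs)"

lemma mk_ordered: "good F xs \<Longrightarrow> ordered (mk F xs)"
proof (cases "xs = []")
  case True
  assume "good F xs"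
  then show ?thesis using True by (simp add: mk_def good_def ordered.fact)
next
  case False
  assume g: "good F xs"
  have "\<forall>i<length xs. ordered (snd (xs ! i)) \<and> snd (xs ! i) \<in> L_ge (fst (xs ! i))"
  proof (intro allI impI)
    fix i assume "i < length xs"
    then have "xs ! i \<in> set xs" by simp
    moreover have "\<forall>x\<in>set xs. ordered (snd x) \<and> snd x \<in> L_ge (fst x)"
      using g unfolding good_def by (auto split: prod.splits)
    ultimately show "ordered (snd (xs ! i)) \<and> snd (xs ! i) \<in> L_ge (fst (xs ! i))"
      by blast
  qed
  then show ?thesis using g False unfolding mk_def Dl_def good_def
    by (auto intro: ordered.step)
qed

lemma mk_eq1: "mk F xs \<turnstile> Conj F (Dl xs)"
  unfolding mk_def by (auto simp: Dl_nil intro: RJ.refl RJ.conjI RJ.top)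

lemma mk_eq2: "Conj F (Dl xs) \<turnstile> mk F xs"
  unfolding mk_def by (auto simp: Dl_nil intro: RJ.refl conjE1)

lemma mk_F: "mk F xs \<turnstile> F"
  using mk_eq1 RJ.cut conjE1 by blast

lemma mk_D: "(m,B) \<in> set xs \<Longrightarrow> mk F xs \<turnstile> Dia m B"
  using mk_eq1 RJ.cut conjE2 Dl_E by blast

lemma mk_mods: "is_fact F \<Longrightarrow> mods (mk F xs) \<subseteq> (\<Union>(m,B)\<in>set xs. insert m (mods B))"
  unfolding mk_def Dl_def using fact_mods mods_conjs by fastforce

definition fconj :: "'a fm \<Rightarrow> 'a fm \<Rightarrow> 'a fm" where
  "fconj F1 F2 = (if F1 = Top then F2 else if F2 = Top then F1 else Conj F1 F2)"

lemma fconj_fact: "is_fact F1 \<Longrightarrow> is_fact F2 \<Longrightarrow> is_fact (fconj F1 F2)"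
  unfolding fconj_def is_fact_def by (auto intro: var_conj.intros)

lemma fconj1: "fconj F1 F2 \<turnstile> F1"
  unfolding fconj_def by (auto intro: RJ.refl RJ.top conjE1)

lemma fconj2: "fconj F1 F2 \<turnstile> F2"
  unfolding fconj_def by (auto intro: RJ.refl RJ.top conjE2)

lemma fconjI: "X \<turnstile> F1 \<Longrightarrow> X \<turnstile> F2 \<Longrightarrow> X \<turnstile> fconj F1 F2"
  unfolding fconj_def by (auto intro: RJ.conjI)

lemma pullS: "\<forall>(m,B)\<in>set S. m < \<alpha> \<Longrightarrow> Conj (Dia \<alpha> X) (Dl S) \<turnstile> Dia \<alpha> (Conj X (Dl S))"
proof (induction S arbitrary: X)
  case Nil
  have "X \<turnstile> Conj X Top" by (intro RJ.conjI RJ.refl RJ.top)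
  then have "Dia \<alpha> X \<turnstile> Dia \<alpha> (Conj X Top)" by (rule RJ.mono)
  then show ?case by (simp add: Dl_nil) (meson RJ.cut conjE1)
next
  case (Cons p S)
  obtain m B where p: "p = (m,B)" by (cases p)
  have lt: "m < \<alpha>" using Cons.prems p by auto
  have S: "\<forall>(m,B)\<in>set S. m < \<alpha>" using Cons.prems by auto
  have 1: "Conj (Dia \<alpha> X) (Dl (p#S)) \<turnstile> Conj (Conj (Dia \<alpha> X) (Dia m B)) (Dl S)"
    by (intro RJ.conjI conjE1 Dl_I RJ.cut[OF conjE2 Dl_E]) (auto simp: p)
  have 2: "Conj (Conj (Dia \<alpha> X) (Dia m B)) (Dl S) \<turnstile> Conj (Dia \<alpha> (Conj X (Dia m B))) (Dl S)"
    by (intro conjI' pull lt RJ.refl)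
  have 3: "Conj (Dia \<alpha> (Conj X (Dia m B))) (Dl S) \<turnstile> Dia \<alpha> (Conj (Conj X (Dia m B)) (Dl S))"
    using Cons.IH S by blast
  have "Conj (Conj X (Dia m B)) (Dl S) \<turnstile> Conj X (Dl (p#S))"
  proof (intro RJ.conjI Dl_I)
    show "Conj (Conj X (Dia m B)) (Dl S) \<turnstile> X" by (meson RJ.cut conjE1)
  next
    fix m' B' assume "(m',B') \<in> set (p#S)"
    then show "Conj (Conj X (Dia m B)) (Dl S) \<turnstile> Dia m' B'"
      using p by (auto intro: RJ.cut[OF conjE1 conjE2] RJ.cut[OF conjE2 Dl_E])
  qed
  then have 4: "Dia \<alpha> (Conj (Conj X (Dia m B)) (Dl S)) \<turnstile> Dia \<alpha> (Conj X (Dl (p#S)))"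
    by (rule RJ.mono)
  show ?case using 1 2 3 4 by (meson RJ.cut)
qed

lemma main: "\<exists>F xs. good F xs \<and> A \<turnstile> Conj F (Dl xs) \<and> Conj F (Dl xs) \<turnstile> A"
proof (induction A)
  case (Var p)
  have "good (Var p) []" by (simp add: good_def is_fact_def var_conj.intros)
  moreover have "Var p \<turnstile> Conj (Var p) (Dl [])" by (simp add: Dl_nil RJ.conjI RJ.refl RJ.top)
  moreover have "Conj (Var p) (Dl []) \<turnstile> Var p" by (rule conjE1)
  ultimately show ?case by blast
next
  case Top
  have "good Top []" by (simp add: good_def is_fact_def)
  moreover have "(Top::'a fm) \<turnstile> Conj Top (Dl [])" by (simp add: Dl_nil RJ.conjI RJ.refl RJ.top)
  moreover have "Conj Top (Dl []) \<turnstile> (Top::'a fm)" by (rule conjE1)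
  ultimately show ?case by blast
next
  case (Conj A B)
  obtain F1 xs1 where h1: "good F1 xs1" "A \<turnstile> Conj F1 (Dl xs1)" "Conj F1 (Dl xs1) \<turnstile> A"
    using Conj.IH(1) by blast
  obtain F2 xs2 where h2: "good F2 xs2" "B \<turnstile> Conj F2 (Dl xs2)" "Conj F2 (Dl xs2) \<turnstile> B"
    using Conj.IH(2) by blast
  define xs where "xs = rev (sort_key fst (xs1 @ xs2))"
  have setxs: "set xs = set xs1 \<union> set xs2" by (simp add: xs_def)
  have "sorted_wrt (\<le>) (map fst (sort_key fst (xs1 @ xs2)))"
    using sorted_sort_key[of fst "xs1 @ xs2"] by (simp add: sorted_wrt_iff_nth_less)
  then have "sorted_wrt (\<ge>) (map fst xs)"
    by (simp add: xs_def rev_map[symmetric] sorted_wrt_rev)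
  then have g: "good (fconj F1 F2) xs"
    using h1(1) h2(1) setxs unfolding good_def by (auto intro: fconj_fact)
  have a1: "A \<turnstile> F1" "A \<turnstile> Dl xs1" using h1(2) by (meson RJ.cut conjE1 conjE2)+
  have a2: "B \<turnstile> F2" "B \<turnstile> Dl xs2" using h2(2) by (meson RJ.cut conjE1 conjE2)+
  have d1: "Conj A B \<turnstile> Conj (fconj F1 F2) (Dl xs)"
  proof (intro RJ.conjI fconjI Dl_I)
    show "Conj A B \<turnstile> F1" using a1 by (meson RJ.cut conjE1)
    show "Conj A B \<turnstile> F2" using a2 by (meson RJ.cut conjE2)
    fix m C assume "(m,C) \<in> set xs"
    then have "(m,C) \<in> set xs1 \<or> (m,C) \<in> set xs2" using setxs by auto
    then show "Conj A B \<turnstile> Dia m C"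
      using a1 a2 by (meson RJ.cut conjE1 conjE2 Dl_E)
  qed
  have d2: "Conj (fconj F1 F2) (Dl xs) \<turnstile> Conj A B"
  proof (intro RJ.conjI)
    have "Conj (fconj F1 F2) (Dl xs) \<turnstile> Conj F1 (Dl xs1)"
      by (intro RJ.conjI Dl_I) (auto intro: RJ.cut[OF conjE1 fconj1] RJ.cut[OF conjE2 Dl_E] simp: setxs)
    then show "Conj (fconj F1 F2) (Dl xs) \<turnstile> A" using h1(3) by (rule RJ.cut)
    have "Conj (fconj F1 F2) (Dl xs) \<turnstile> Conj F2 (Dl xs2)"
      by (intro RJ.conjI Dl_I) (auto intro: RJ.cut[OF conjE1 fconj2] RJ.cut[OF conjE2 Dl_E] simp: setxs)
    then show "Conj (fconj F1 F2) (Dl xs) \<turnstile> B" using h2(3) by (rule RJ.cut)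
  qed
  show ?case using g d1 d2 by blast
next
  case (Dia \<alpha> A)
  obtain F xs where h: "good F xs" "A \<turnstile> Conj F (Dl xs)" "Conj F (Dl xs) \<turnstile> A"
    using Dia.IH by blast
  define P where "P = filter (\<lambda>(m,B). \<alpha> \<le> m) xs"
  define S where "S = filter (\<lambda>(m,B). \<not> \<alpha> \<le> m) xs"
  define ys where "ys = (\<alpha>, mk F P) # S"
  have fF: "is_fact F" using h(1) by (simp add: good_def)
  have gP: "good F P" using h(1) unfolding good_def P_def
    by (auto simp: sorted_wrt_filter sorted_wrt_map)
  have ordP: "ordered (mk F P)" using gP by (rule mk_ordered)
  have LP: "mk F P \<in> L_ge \<alpha>"
  proof -
    have "\<forall>\<beta>\<in>(\<Union>(m,B)\<in>set P. insert m (mods B)). \<alpha> \<le> \<beta>"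
      using h(1) unfolding P_def good_def L_ge_def by (fastforce intro: order_trans)
    then show ?thesis using mk_mods[OF fF, of P] unfolding L_ge_def by blast
  qed
  have sS: "sorted_wrt (\<ge>) (map fst S)" using h(1) unfolding good_def S_def
    by (simp add: sorted_wrt_filter sorted_wrt_map)
  have Slt: "\<forall>(m,B)\<in>set S. m < \<alpha>" by (auto simp: S_def)
  have g: "good Top ys"
    using h(1) ordP LP sS Slt unfolding good_def ys_def S_def
    by (auto simp: is_fact_def)
  have d1: "Dia \<alpha> A \<turnstile> Conj Top (Dl ys)"
  proof (intro RJ.conjI RJ.top Dl_I)
    fix m B assume "(m,B) \<in> set ys"
    then consider "m = \<alpha>" "B = mk F P" | "(m,B) \<in> set S" unfolding ys_def by auto
    then show "Dia \<alpha> A \<turnstile> Dia m B"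
    proof cases
      case 1
      have "Conj F (Dl xs) \<turnstile> mk F P"
        by (rule RJ.cut[OF _ mk_eq2], intro RJ.conjI conjE1 Dl_I RJ.cut[OF conjE2 Dl_E])
           (auto simp: P_def)
      then have "A \<turnstile> mk F P" using h(2) by (rule RJ.cut[rotated])
      then show ?thesis using 1 by (simp add: RJ.mono)
    next
      case 2
      then have "(m,B) \<in> set xs" "m \<le> \<alpha>" by (auto simp: S_def)
      then have "A \<turnstile> Dia m B" using h(2) by (meson RJ.cut conjE2 Dl_E)
      then have "Dia \<alpha> A \<turnstile> Dia \<alpha> (Dia m B)" by (rule RJ.mono)
      then show ?thesis using absorb1[OF \<open>m \<le> \<alpha>\<close>] by (rule RJ.cut)
    qed
  qed
  have d2: "Conj Top (Dl ys) \<turnstile> Dia \<alpha> A"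
  proof -
    have 1: "Conj Top (Dl ys) \<turnstile> Conj (Dia \<alpha> (mk F P)) (Dl S)"
      by (intro RJ.conjI Dl_I RJ.cut[OF conjE2 Dl_E]) (auto simp: ys_def)
    have 2: "Conj (Dia \<alpha> (mk F P)) (Dl S) \<turnstile> Dia \<alpha> (Conj (mk F P) (Dl S))"
      using pullS Slt by blast
    have "Conj (mk F P) (Dl S) \<turnstile> Conj F (Dl xs)"
    proof (intro RJ.conjI Dl_I)
      show "Conj (mk F P) (Dl S) \<turnstile> F" by (rule RJ.cut[OF conjE1 mk_F])
      fix m B assume "(m,B) \<in> set xs"
      then have "(m,B) \<in> set P \<or> (m,B) \<in> set S" by (auto simp: P_def S_def)
      then show "Conj (mk F P) (Dl S) \<turnstile> Dia m B"
        by (meson RJ.cut conjE1 conjE2 mk_D Dl_E)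
    qed
    then have "Conj (mk F P) (Dl S) \<turnstile> A" using h(3) by (rule RJ.cut)
    then have 3: "Dia \<alpha> (Conj (mk F P) (Dl S)) \<turnstile> Dia \<alpha> A" by (rule RJ.mono)
    show ?thesis using 1 2 3 by (meson RJ.cut)
  qed
  show ?case using g d1 d2 by blast
qed

theorem lemma5p3:
  fixes A :: "'a fm"
  shows "\<exists>A'. ordered A' \<and> A \<turnstile> A' \<and> A' \<turnstile> A"
proof -
  obtain F xs where h: "good F xs" "A \<turnstile> Conj F (Dl xs)" "Conj F (Dl xs) \<turnstile> A"
    using main by blast
  have "ordered (mk F xs)" using h(1) by (rule mk_ordered)
  moreover have "A \<turnstile> mk F xs" using h(2) mk_eq2 by (rule RJ.cut)
  moreover have "mk F xs \<turnstile> A" using mk_eq1 h(3) by (rule RJ.cut)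
  ultimately show ?thesis by blast
qed

end
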